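(* Let $N\ge1$, $0<\alpha\le2$, $\gamma>0$, $p\in[0,1]$, and let $Y\in\mathrm{Herm}(N)$ be an invariant random matrix with characteristic function $$\mathbb E[\exp(i\mathrm{Tr}\,YS)]=\exp\big(-\gamma[p\,\nu_\alpha(\mathrm{Tr}\,S/\sqrt N)+(1-p)\,\nu_\alpha(-\mathrm{Tr}\,S/\sqrt N)]\big),\quad S\in\mathrm{Herm}(N).$$ Then $Y=yI_N/\sqrt N$, where $y$ is a real random variable with the Lévy $\alpha$-stable law given by $\mathbb E[\exp(iyk)]=\exp(-\gamma[p\,\nu_\alpha(k)+(1-p)\,\nu_\alpha(-k)])$, $k\in\mathbb R$.
   Context: $\nu_\alpha(u)=|u|^\alpha(1-i\,\mathrm{sgn}(u)\tan\frac{\pi\alpha}2)$ for $\alpha\ne1$ and $\nu_1(u)=|u|(1+\frac{2i}\pi\mathrm{sgn}(u)\log|u|)$. An invariant random matrix satisfies $UYU^\dagger\overset d=Y$ for all unitary $U$. The equality $Y=yI_N/\sqrt N$ is in distribution. *)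

theory Defs
  imports "HOL-Probability.Probability"
begin

definition cadj :: "complex^'n^'n \<Rightarrow> complex^'n^'n" where
  "cadj A = (\<chi> i j. cnj (A $ j $ i))"

definition hermitian :: "complex^'n^'n \<Rightarrow> bool" where
  "hermitian A \<longleftrightarrow> cadj A = A"

definition unitary :: "complex^'n^'n \<Rightarrow> bool" where
  "unitary U \<longleftrightarrow> cadj U ** U = mat 1 \<and> U ** cadj U = mat 1"

definition nu :: "real \<Rightarrow> real \<Rightarrow> complex" where
  "nu \<alpha> u = (if \<alpha> = 1
     then complex_of_real \<bar>u\<bar> * (1 + (2 * \<i> / pi) * complex_of_real (sgn u * ln \<bar>u\<bar>))
     else complex_of_real (\<bar>u\<bar> powr \<alpha>) * (1 - \<i> * complex_of_real (sgn u * tan (pi * \<alpha> / 2))))"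

end

theory Submission
  imports Defs
begin

lemma iexp_one_AE:
  fixes f :: "'a \<Rightarrow> real"
  assumes "prob_space M" and "(CLINT \<omega>|M. iexp (f \<omega>)) = 1"
  shows "AE \<omega> in M. cos (f \<omega>) = 1"
proof -
  interpret prob_space M by fact
  have int: "integrable M (\<lambda>\<omega>. iexp (f \<omega>))"
    using assms(2) not_integrable_integral_eq by fastforce
  have ic: "integrable M (\<lambda>\<omega>. cos (f \<omega>))"
    using integrable_Re[OF int] by (simp add: Re_exp)
  have "(LINT \<omega>|M. cos (f \<omega>)) = Re (CLINT \<omega>|M. iexp (f \<omega>))"
    using integral_Re[of M "\<lambda>\<omega>. iexp (f \<omega>)"] int by (simp add: Re_exp)
  then have c1: "(LINT \<omega>|M. cos (f \<omega>)) = 1" using assms(2) by simp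
  have i2: "integrable M (\<lambda>\<omega>. 1 - cos (f \<omega>))" using ic by auto
  have "(LINT \<omega>|M. 1 - cos (f \<omega>)) = 0"
    using c1 ic by (simp add: prob_space)
  then have "AE \<omega> in M. 1 - cos (f \<omega>) = 0"
    using integral_nonneg_eq_0_iff_AE[OF i2] by simp
  then show ?thesis by auto
qed

lemma cos_all_zero:
  fixes X :: real
  assumes "\<forall>k::nat. cos (X / real (Suc k)) = 1"
  shows "X = 0"
proof (rule ccontr)
  assume nz: "X \<noteq> 0"
  define k where "k = nat \<lceil>\<bar>X\<bar>\<rceil>"
  obtain n :: int where n: "X / real (Suc k) = n * 2 * pi"
    using assms cos_one_2pi_int[of "X / real (Suc k)"] by auto
  have "n \<noteq> 0" using n nz by auto
  then have "\<bar>real_of_int n\<bar> \<ge> 1" by linarith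
  have "X = real_of_int n * 2 * pi * real (Suc k)"
    using n by (simp add: field_simps)
  then have "\<bar>X\<bar> = \<bar>real_of_int n\<bar> * 2 * pi * real (Suc k)"
    by (simp add: abs_mult)
  also have "\<dots> \<ge> 1 * 2 * 3 * real (Suc k)"
    using \<open>\<bar>real_of_int n\<bar> \<ge> 1\<close> pi_gt3
    by (intro mult_mono) auto
  finally have "\<bar>X\<bar> \<ge> 6 * real (Suc k)" by simp
  moreover have "real k \<ge> \<bar>X\<bar>" unfolding k_def by linarith
  ultimately show False by simp
qed

lemma trace_mult_scale:
  fixes A S :: "complex^'n^'n"
  shows "trace (A ** (t *\<^sub>R S)) = complex_of_real t * trace (A ** S)"
  unfolding trace_def matrix_matrix_mult_def
  by (simp add: vector_scaleR_component sum_distrib_left algebra_simps del: scaleR_conv_of_real) (simp add: scaleR_conv_of_real algebra_simps)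

lemma hermitian_scale:
  fixes S :: "complex^'n^'n"
  shows "hermitian S \<Longrightarrow> hermitian (t *\<^sub>R S)"
  unfolding hermitian_def cadj_def
  by (simp add: vec_eq_iff vector_scaleR_component del: scaleR_conv_of_real)

lemma trace_scale:
  fixes S :: "complex^'n^'n"
  shows "trace (t *\<^sub>R S) = complex_of_real t * trace S"
  unfolding trace_def
  by (simp add: vector_scaleR_component sum_distrib_left del: scaleR_conv_of_real) (simp add: scaleR_conv_of_real)

lemma nu_zero: "nu a 0 = 0"
  by (simp add: nu_def)

lemma key:
  fixes M :: "'a measure" and Y :: "'a \<Rightarrow> complex^'n^'n" and S :: "complex^'n^'n"
  assumes P: "prob_space M"
    and H: "\<forall>S. hermitian S \<longrightarrow>
           (CLINT \<omega>|M. iexp (Re (trace (Y \<omega> ** S)))) =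
           exp (- complex_of_real \<gamma> *
                (complex_of_real p * nu \<alpha> (Re (trace S) / sqrt (real CARD('n)))
                 + complex_of_real (1 - p) * nu \<alpha> (- Re (trace S) / sqrt (real CARD('n)))))"
    and hS: "hermitian S" and tS: "Re (trace S) = 0"
  shows "AE \<omega> in M. Re (trace (Y \<omega> ** S)) = 0"
proof -
  have "AE \<omega> in M. \<forall>k::nat. cos (Re (trace (Y \<omega> ** S)) / real (Suc k)) = 1"
  proof (subst AE_all_countable, intro allI)
    fix k :: nat
    define t where "t = 1 / real (Suc k)"
    have h: "hermitian (t *\<^sub>R S)" using hS by (rule hermitian_scale)
    have "(CLINT \<omega>|M. iexp (Re (trace (Y \<omega> ** (t *\<^sub>R S))))) = 1"
      using H[rule_format, OF h] by (simp add: trace_scale tS nu_zero)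
    then have "AE \<omega> in M. cos (Re (trace (Y \<omega> ** (t *\<^sub>R S)))) = 1"
      by (rule iexp_one_AE[OF P])
    then show "AE \<omega> in M. cos (Re (trace (Y \<omega> ** S)) / real (Suc k)) = 1"
      by (simp add: trace_mult_scale t_def)
  qed
  then show ?thesis
    by (rule eventually_mono) (rule cos_all_zero)
qed

definition offd :: "'n::finite \<Rightarrow> 'n \<Rightarrow> complex \<Rightarrow> complex^'n^'n" where
  "offd i j c = (\<chi> a b. (if a = j \<and> b = i then c else 0) + (if a = i \<and> b = j then cnj c else 0))"

definition diagd :: "'n::finite \<Rightarrow> 'n \<Rightarrow> complex^'n^'n" where
  "diagd i j = (\<chi> a b. if a = b then (if a = i then 1 else 0) - (if a = j then 1 else 0) else 0)"

lemma herm_lambda: "hermitian (\<chi> a b. g a b) \<longleftrightarrow> (\<forall>a b. cnj (g b a) = g a b)"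
  unfolding hermitian_def cadj_def by (simp add: vec_eq_iff)


lemma herm_offd: "hermitian (offd i j c)"
  unfolding offd_def herm_lambda
proof (intro allI)
  fix a b
  have e1: "(b = j \<and> a = i) = (a = i \<and> b = j)" "(b = i \<and> a = j) = (a = j \<and> b = i)" by blast+
  show "cnj ((if b = j \<and> a = i then c else 0) + (if b = i \<and> a = j then cnj c else 0)) =
    (if a = j \<and> b = i then c else 0) + (if a = i \<and> b = j then cnj c else 0)"
    unfolding e1 by (simp only: complex_cnj_add if_distrib[where f=cnj] complex_cnj_cnj complex_cnj_zero add.commute)
qed

lemma herm_diagd: "hermitian (diagd i j)"
  unfolding diagd_def herm_lambda
proof (intro allI)
  fix a b :: 'a
  show "cnj (if b = a then (if b = i then 1 else 0) - (if b = j then 1 else 0) else 0) =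
    (if a = b then (if a = i then 1 else 0) - (if a = j then 1 else 0) else 0)"
    by (cases "a = b") simp_all
qed

lemma md: "(x::complex) * (if P then y else 0) = (if P then x * y else 0)" by simp

lemma sum2_delta:
  fixes f :: "'n::finite \<Rightarrow> 'n \<Rightarrow> complex"
  shows "(\<Sum>a\<in>UNIV. \<Sum>b\<in>UNIV. f a b * (if b = j \<and> a = i then c else 0)) = f i j * c"
proof -
  have "\<And>a. (\<Sum>b\<in>UNIV. f a b * (if b = j \<and> a = i then c else 0)) = (if a = i then f i j * c else 0)"
    by (case_tac "a = i") (simp_all add: md)
  then show ?thesis by simp
qed

lemma trace_mult_offd: "trace (A ** offd i j c) = A$i$j * c + A$j$i * cnj c"
proof -
  have "trace (A ** offd i j c) = (\<Sum>a\<in>UNIV. \<Sum>b\<in>UNIV. A$a$b * (if b = j \<and> a = i then c else 0))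
     + (\<Sum>a\<in>UNIV. \<Sum>b\<in>UNIV. A$a$b * (if b = i \<and> a = j then cnj c else 0))"
    unfolding trace_def offd_def matrix_matrix_mult_def
    by (simp only: vec_lambda_beta distrib_left sum.distrib)
  also have "\<dots> = A$i$j * c + A$j$i * cnj c" by (simp only: sum2_delta)
  finally show ?thesis .
qed

lemma trace_offd: assumes "i \<noteq> j" shows "trace (offd i j c) = 0"
  unfolding trace_def offd_def using assms
  by (intro sum.neutral) auto

lemma trace_diagd: "trace (diagd i j) = 0"
  unfolding trace_def diagd_def by (simp add: sum_subtractf)

lemma trace_mult_diagd: "trace (A ** diagd i j) = A$i$i - A$j$j"
proof -
  have "\<And>a. (\<Sum>b\<in>UNIV. A$a$b * (if b = a then (if b = i then 1 else 0) - (if b = j then 1 else 0) else 0))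
     = A$a$a * ((if a = i then 1 else 0) - (if a = j then 1 else 0))"
    by (simp add: if_distrib[where f="\<lambda>x. _ * x"] cong: if_cong)
  then show ?thesis
    unfolding trace_def diagd_def matrix_matrix_mult_def
    by (simp add: right_diff_distrib sum_subtractf md)
qed

lemma pointwise:
  fixes A :: "complex^'n^'n"
  assumes H: "hermitian A"
    and off: "\<forall>i\<in>UNIV. \<forall>j\<in>UNIV.
      (i \<noteq> j \<longrightarrow> Re (trace (A ** offd i j 1)) = 0 \<and> Re (trace (A ** offd i j \<i>)) = 0)
      \<and> Re (trace (A ** diagd i j)) = 0"
    and N: "N = real CARD('n)" and sNN: "sqrt N * sqrt N = N" and Npos: "N > 0"
  shows "A = (Re (trace A) / sqrt N / sqrt N) *\<^sub>R (mat 1 :: complex^'n^'n)"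
proof -
  have c: "A$j$i = cnj (A$i$j)" for i j
    using H unfolding hermitian_def cadj_def by (metis vec_lambda_beta)
  have offz: "A$i$j = 0" if "i \<noteq> j" for i j
  proof -
    have "Re (trace (A ** offd i j 1)) = 0" "Re (trace (A ** offd i j \<i>)) = 0"
      using off that by blast+
    then have "Re (A$i$j * 1 + A$j$i * cnj 1) = 0" "Re (A$i$j * \<i> + A$j$i * cnj \<i>) = 0"
      by (simp_all only: trace_mult_offd)
    then have "Re (A$i$j) = 0" "Im (A$i$j) = 0" unfolding c[of i j] by simp_all
    then show ?thesis by (simp add: complex_eq_iff)
  qed
  have imd: "Im (A$i$i) = 0" for i using c[of i i] by (metis cnj.simps(2) neg_equal_zero)
  have red: "Re (A$i$i) = Re (A$j$j)" for i j
  proof -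
    have "Re (trace (A ** diagd i j)) = 0" using off by blast
    then show ?thesis by (simp add: trace_mult_diagd)
  qed
  have diag: "A$i$i = of_real (Re (trace A) / sqrt N / sqrt N)" for i
  proof -
    have "Re (trace A) = (\<Sum>a\<in>UNIV. Re (A$a$a))" unfolding trace_def by (simp add: Re_sum)
    also have "\<dots> = (\<Sum>a\<in>(UNIV::'n set). Re (A$i$i))" by (rule sum.cong[OF refl]) (rule red)
    also have "\<dots> = N * Re (A$i$i)" using N by simp
    finally have "Re (trace A) / sqrt N / sqrt N = Re (A$i$i)"
      using Npos sNN by (simp add: field_simps)
    then show ?thesis using imd[of i] by (simp add: complex_eq_iff)
  qed
  have "A$i$j = ((Re (trace A) / sqrt N / sqrt N) *\<^sub>R (mat 1 :: complex^'n^'n))$i$j" for i j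
    unfolding vector_scaleR_component mat_def
    by (cases "i = j") (simp_all add: offz diag scaleR_conv_of_real)
  then show ?thesis by (simp only: vec_eq_iff) blast
qed

theorem corollary4p8:
  fixes M :: "'a measure" and Y :: "'a \<Rightarrow> complex^'n^'n"
    and \<alpha> \<gamma> p :: real
  assumes "prob_space M"
    and "Y \<in> borel_measurable M"
    and "\<forall>\<omega>\<in>space M. hermitian (Y \<omega>)"
    and "0 < \<alpha>" and "\<alpha> \<le> 2" and "0 < \<gamma>" and "0 \<le> p" and "p \<le> 1"
    and "\<forall>U. unitary U \<longrightarrow>
           distr M borel (\<lambda>\<omega>. U ** Y \<omega> ** cadj U) = distr M borel Y"
    and "\<forall>S. hermitian S \<longrightarrow>
           (CLINT \<omega>|M. iexp (Re (trace (Y \<omega> ** S)))) =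
           exp (- complex_of_real \<gamma> *
                (complex_of_real p * nu \<alpha> (Re (trace S) / sqrt (real CARD('n)))
                 + complex_of_real (1 - p) * nu \<alpha> (- Re (trace S) / sqrt (real CARD('n)))))"
  shows "\<exists>\<mu> :: real measure. prob_space \<mu> \<and> sets \<mu> = sets borel \<and>
           (\<forall>k. char \<mu> k = exp (- complex_of_real \<gamma> *
                 (complex_of_real p * nu \<alpha> k + complex_of_real (1 - p) * nu \<alpha> (- k)))) \<and>
           distr M borel Y =
           distr \<mu> borel (\<lambda>y. (y / sqrt (real CARD('n))) *\<^sub>R (mat 1 :: complex^'n^'n))"
proof -
  interpret P: prob_space M by fact
  define N where "N = real CARD('n)"
  have Npos: "N > 0" unfolding N_def by simp
  have sNN: "sqrt N * sqrt N = N" using Npos by simp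
  define g where "g \<omega> = Re (trace (Y \<omega>)) / sqrt N" for \<omega>
  have cont: "continuous_on UNIV (\<lambda>A::complex^'n^'n. Re (trace A) / sqrt N)"
    unfolding trace_def using Npos by (auto intro!: continuous_intros)
  have gm: "g \<in> borel_measurable M"
    unfolding g_def by (rule borel_measurable_continuous_on[OF cont assms(2)])
  define \<mu> where "\<mu> = distr M borel g"
  have ps: "prob_space \<mu>" unfolding \<mu>_def by (rule P.prob_space_distr[OF gm])
  have sets: "sets \<mu> = sets borel" unfolding \<mu>_def by simp
  have hI: "hermitian (mat 1 :: complex^'n^'n)"
    unfolding hermitian_def cadj_def mat_def by (simp add: vec_eq_iff)
  have ch: "char \<mu> k = exp (- complex_of_real \<gamma> *
                 (complex_of_real p * nu \<alpha> k + complex_of_real (1 - p) * nu \<alpha> (- k)))" for k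
  proof -
    define S where "S = (k / sqrt N) *\<^sub>R (mat 1 :: complex^'n^'n)"
    have hS: "hermitian S" unfolding S_def by (rule hermitian_scale[OF hI])
    have iem: "(\<lambda>x::real. iexp (k * x)) \<in> borel_measurable borel"
      by (intro borel_measurable_continuous_onI continuous_intros)
    have "char \<mu> k = (CLINT \<omega>|M. iexp (k * g \<omega>))"
      unfolding \<mu>_def char_def by (rule integral_distr[OF gm iem])
    also have "\<dots> = (CLINT \<omega>|M. iexp (Re (trace (Y \<omega> ** S))))"
      unfolding S_def g_def by (simp add: trace_mult_scale)
    also have "Re (trace S) / sqrt N = k"
      unfolding S_def using Npos sNN by (simp add: trace_scale trace_I N_def[symmetric] field_simps)
    then have "(CLINT \<omega>|M. iexp (Re (trace (Y \<omega> ** S)))) = exp (- complex_of_real \<gamma> *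
                 (complex_of_real p * nu \<alpha> k + complex_of_real (1 - p) * nu \<alpha> (- k)))"
      using assms(10) hS unfolding N_def by simp
    finally show ?thesis .
  qed
  have K: "AE \<omega> in M. Re (trace (Y \<omega> ** S)) = 0" if "hermitian S" "Re (trace S) = 0" for S
    by (rule key[OF assms(1) assms(10) that])
  have AEall: "AE \<omega> in M. \<forall>i\<in>UNIV. \<forall>j\<in>UNIV.
      (i \<noteq> j \<longrightarrow> Re (trace (Y \<omega> ** offd i j 1)) = 0 \<and> Re (trace (Y \<omega> ** offd i j \<i>)) = 0)
      \<and> Re (trace (Y \<omega> ** diagd i j)) = 0"
  proof (intro AE_finite_allI)
    fix i j :: 'n
    have "AE \<omega> in M. i \<noteq> j \<longrightarrow> Re (trace (Y \<omega> ** offd i j 1)) = 0 \<and> Re (trace (Y \<omega> ** offd i j \<i>)) = 0"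
    proof (cases "i = j")
      case False
      have a1: "AE \<omega> in M. Re (trace (Y \<omega> ** offd i j 1)) = 0"
        by (rule K[OF herm_offd]) (simp add: trace_offd[OF False])
      have a2: "AE \<omega> in M. Re (trace (Y \<omega> ** offd i j \<i>)) = 0"
        by (rule K[OF herm_offd]) (simp add: trace_offd[OF False])
      from a1 a2 show ?thesis by eventually_elim simp
    qed simp
    moreover have "AE \<omega> in M. Re (trace (Y \<omega> ** diagd i j)) = 0"
      by (rule K[OF herm_diagd]) (simp add: trace_diagd)
    ultimately show "AE \<omega> in M. (i \<noteq> j \<longrightarrow> Re (trace (Y \<omega> ** offd i j 1)) = 0 \<and> Re (trace (Y \<omega> ** offd i j \<i>)) = 0)
      \<and> Re (trace (Y \<omega> ** diagd i j)) = 0" by eventually_elim simp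
  qed simp_all
  have AEH: "AE \<omega> in M. hermitian (Y \<omega>)" using assms(3) by (intro AE_I2) auto
  have AEeq: "AE \<omega> in M. Y \<omega> = (g \<omega> / sqrt N) *\<^sub>R (mat 1 :: complex^'n^'n)"
    using AEall AEH
  proof (eventually_elim)
    case (elim \<omega>)
    then show ?case unfolding g_def using Npos sNN N_def by (intro pointwise) auto
  qed
  define F where "F y = (y / sqrt N) *\<^sub>R (mat 1 :: complex^'n^'n)" for y
  have Fm: "F \<in> borel_measurable borel"
    unfolding F_def using Npos by (intro borel_measurable_continuous_onI) (auto intro!: continuous_intros)
  have "distr \<mu> borel F = distr M borel (F \<circ> g)"
    unfolding \<mu>_def by (rule distr_distr[OF Fm gm])
  also have "\<dots> = distr M borel Y"
    using AEeq gm Fm assms(2) unfolding F_def comp_def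
    by (intro distr_cong_AE) (auto simp: measurable_comp eq_commute)
  finally have "distr M borel Y = distr \<mu> borel F" ..
  then show ?thesis using ps sets ch unfolding F_def N_def by blast
qed

end
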